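(* Let $b$ be a negative integer and let $f(x)=\sum_{k=2}^{\infty}x^k\sum_{j\ge1,\ j\ne -b}\frac{1}{(j+b)^k}$ (the singular term $j=-b$ omitted), convergent for $|x|<1$. Then for $x$ in this disc with $x\neq b$, $2x\notin\mathbb{Z}$, $$f(x)=1+\frac{x^2}{2b(x-b)}-\frac{\pi x}{2}\cot(\pi x)-\pi x\int_0^1\left(\frac{\sin(2\pi(x-b)u)}{\sin(2\pi x)}-u\cos(2\pi b u)\right)\cot(\pi u)\,du,$$ and the right-hand side gives an analytic continuation of $f$ to such $x\in\mathbb{C}$. *)

theory Defs
  imports "HOL-Complex_Analysis.Complex_Analysis"
begin

definition coeffB :: "int \<Rightarrow> nat \<Rightarrow> complex" where
  "coeffB b k = (\<Sum>\<^sub>\<infinity>j\<in>{j::nat. j \<ge> 1 \<and> int j \<noteq> - b}. 1 / (of_int (int j + b)) ^ k)"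

definition fB :: "int \<Rightarrow> complex \<Rightarrow> complex" where
  "fB b x = (\<Sum>k. x ^ (k + 2) * coeffB b (k + 2))"

definition rhsB :: "int \<Rightarrow> complex \<Rightarrow> complex" where
  "rhsB b x = 1 + x^2 / (2 * of_int b * (x - of_int b))
     - of_real pi * x / 2 * cot (of_real pi * x)
     - of_real pi * x * integral {0..1::real}
         (\<lambda>u. (sin (2 * of_real pi * (x - of_int b) * of_real u) / sin (2 * of_real pi * x)
                - of_real u * cos (2 * of_real pi * of_int b * of_real u))
               * of_real (cot (pi * u)))"

end

theory Submission
  imports Defs "HOL-Complex_Analysis.Complex_Analysis"
begin

lemma Digamma_reflection:
  fixes z :: complex
  assumes z: "z \<notin> \<int>"
  shows "Digamma (1 - z) - Digamma z = of_real pi * cot (of_real pi * z)"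
proof -
  let ?g = "\<lambda>z::complex. Gamma z * Gamma (1 - z) * sin (of_real pi * z)"
  let ?h' = "\<lambda>z. Gamma z * Gamma (1 - z) * ((Digamma z - Digamma (1 - z)) * sin (of_real pi * z) +
                     of_real pi * cos (of_real pi * z))"
  have z1: "1 - z \<notin> \<int>" using z Ints_diff[of 1 "1-z"] by auto
  have nz: "z \<notin> \<int>\<^sub>\<le>\<^sub>0" "1 - z \<notin> \<int>\<^sub>\<le>\<^sub>0" using z z1 nonpos_Ints_subset_Ints by auto
  have d1: "(?g has_field_derivative ?h' z) (at z)"
    using nz by (auto intro!: derivative_eq_intros simp: algebra_simps)
  have ev: "eventually (\<lambda>t. t \<in> UNIV - \<int>) (nhds z)"
    using z by (intro eventually_nhds_in_open) (auto simp: open_Diff)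
  have ev2: "eventually (\<lambda>t. ?g t = of_real pi) (nhds z)"
    using ev
  proof eventually_elim
    case (elim t)
    then have "sin (of_real pi * t) \<noteq> 0" by (subst sin_eq_0) auto
    then show ?case using Gamma_reflection_complex[of t] by (simp add: field_simps)
  qed
  have d2: "(?g has_field_derivative 0) (at z)"
    by (subst DERIV_cong_ev[OF refl ev2 refl]) (rule DERIV_const)
  have "?h' z = 0" using DERIV_unique[OF d1 d2] .
  moreover have sz: "sin (of_real pi * z) \<noteq> 0" using z by (subst sin_eq_0) auto
  moreover have "Gamma z \<noteq> 0" "Gamma (1 - z) \<noteq> 0" using nz by (auto simp: Gamma_eq_zero_iff)
  ultimately have "(Digamma z - Digamma (1 - z)) * sin (of_real pi * z) + of_real pi * cos (of_real pi * z) = 0"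
    by simp
  then show ?thesis using sz by (simp add: cot_def field_simps)
qed

definition cc :: "real \<Rightarrow> complex" where "cc u = complex_of_real (cot (pi * u))"

lemma lim_ucot0: "((\<lambda>u::real. u * cot (pi * u)) \<longlongrightarrow> 1 / pi) (at 0)"
proof -
  have d: "((\<lambda>u::real. sin (pi * u)) has_field_derivative pi) (at 0)"
    by (auto intro!: derivative_eq_intros)
  have "((\<lambda>y. ((\<lambda>u::real. sin (pi * u)) y - (\<lambda>u::real. sin (pi * u)) 0) / (y - 0)) \<longlongrightarrow> pi) (at 0)"
    using d unfolding has_field_derivative_iff .
  then have l1: "((\<lambda>u::real. sin (pi * u) / u) \<longlongrightarrow> pi) (at 0)" by simp
  have "((\<lambda>u::real. cos (pi * u)) \<longlongrightarrow> cos (pi * 0)) (at 0)" by (intro tendsto_intros)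
  from tendsto_divide[OF this l1] have l2: "((\<lambda>u::real. cos (pi * u) / (sin (pi * u) / u)) \<longlongrightarrow> 1 / pi) (at 0)"
    by simp
  show ?thesis
    by (rule Lim_transform_eventually[OF l2]) (auto simp: eventually_at cot_def intro!: exI[of _ 1])
qed

lemma lim_ucot1: "((\<lambda>u::real. (u - 1) * cot (pi * u)) \<longlongrightarrow> 1 / pi) (at 1)"
proof -
  have d: "((\<lambda>u::real. sin (pi * u)) has_field_derivative cos (pi * 1) * pi) (at 1)"
    by (auto intro!: derivative_eq_intros)
  have "((\<lambda>y. ((\<lambda>u::real. sin (pi * u)) y - (\<lambda>u::real. sin (pi * u)) 1) / (y - 1)) \<longlongrightarrow> cos (pi * 1) * pi) (at 1)"
    using d unfolding has_field_derivative_iff .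
  then have l1: "((\<lambda>u::real. sin (pi * u) / (u - 1)) \<longlongrightarrow> - pi) (at 1)" by simp
  have "((\<lambda>u::real. cos (pi * u)) \<longlongrightarrow> cos (pi * 1)) (at 1)" by (intro tendsto_intros)
  from tendsto_divide[OF this l1] have l2: "((\<lambda>u::real. cos (pi * u) / (sin (pi * u) / (u - 1))) \<longlongrightarrow> 1 / pi) (at 1)"
    by simp
  show ?thesis
    by (rule Lim_transform_eventually[OF l2]) (auto simp: eventually_at cot_def intro!: exI[of _ 1])
qed

lemma lim_G0:
  fixes G :: "complex \<Rightarrow> complex"
  assumes "(G has_field_derivative D) (at 0)" "G 0 = 0"
  shows "((\<lambda>u::real. G (of_real u) * cc u) \<longlongrightarrow> D / of_real pi) (at 0)"
proof -
  have l: "((\<lambda>z. G z / z) \<longlongrightarrow> D) (at 0)"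
    using assms unfolding has_field_derivative_iff by simp
  have "((\<lambda>u::real. G (of_real u) / of_real u) \<longlongrightarrow> D) (at 0)"
  proof -
    have "((\<lambda>u::real. of_real u :: complex) \<longlongrightarrow> 0) (at 0)" by (auto intro!: tendsto_eq_intros)
    moreover have "\<exists>d>0. \<forall>x::real. x \<noteq> 0 \<and> norm (x - 0) < d \<longrightarrow> (of_real x::complex) \<noteq> 0"
      by (intro exI[of _ 1]) auto
    ultimately show ?thesis using LIM_compose2[OF _ l] by blast
  qed
  then have "((\<lambda>u::real. G (of_real u) / of_real u * of_real (u * cot (pi * u))) \<longlongrightarrow> D * of_real (1/pi)) (at 0)"
    by (rule tendsto_mult[OF _ tendsto_of_real[OF lim_ucot0]])
  moreover have "D * complex_of_real (1/pi) = D / complex_of_real pi" by (simp add: divide_inverse)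
  ultimately have "((\<lambda>u::real. G (of_real u) / of_real u * of_real (u * cot (pi * u))) \<longlongrightarrow> D / of_real pi) (at 0)" by simp
  then show ?thesis
    by (rule Lim_transform_eventually) (auto simp: eventually_at cc_def intro!: exI[of _ 1])
qed

lemma lim_G1:
  fixes G :: "complex \<Rightarrow> complex"
  assumes "(G has_field_derivative D) (at 1)" "G 1 = 0"
  shows "((\<lambda>u::real. G (of_real u) * cc u) \<longlongrightarrow> D / of_real pi) (at 1)"
proof -
  have l: "((\<lambda>z. G z / (z - 1)) \<longlongrightarrow> D) (at 1)"
    using assms unfolding has_field_derivative_iff by simp
  have "((\<lambda>u::real. G (of_real u) / (of_real u - 1)) \<longlongrightarrow> D) (at 1)"
  proof -
    have "((\<lambda>u::real. of_real u :: complex) \<longlongrightarrow> 1) (at 1)" by (auto intro!: tendsto_eq_intros)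
    moreover have "\<exists>d>0. \<forall>x::real. x \<noteq> 1 \<and> norm (x - 1) < d \<longrightarrow> (of_real x::complex) \<noteq> 1"
      by (intro exI[of _ 1]) auto
    ultimately show ?thesis using LIM_compose2[OF _ l] by blast
  qed
  then have "((\<lambda>u::real. G (of_real u) / (of_real u - 1) * of_real ((u - 1) * cot (pi * u))) \<longlongrightarrow> D * of_real (1/pi)) (at 1)"
    by (rule tendsto_mult[OF _ tendsto_of_real[OF lim_ucot1]])
  moreover have "D * complex_of_real (1/pi) = D / complex_of_real pi" by (simp add: divide_inverse)
  ultimately have "((\<lambda>u::real. G (of_real u) / (of_real u - 1) * of_real ((u - 1) * cot (pi * u))) \<longlongrightarrow> D / of_real pi) (at 1)" by simp
  then show ?thesis
    by (rule Lim_transform_eventually) (auto simp: eventually_at cc_def intro!: exI[of _ 1])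
qed

lemma ext_cont:
  fixes G :: "complex \<Rightarrow> complex"
  assumes "\<And>z. G field_differentiable at z" "G 0 = 0" "G 1 = 0"
  obtains h where "continuous_on {0..1} h" "\<And>u. 0 < u \<Longrightarrow> u < 1 \<Longrightarrow> h u = G (of_real u) * cc u"
proof -
  obtain D0 where D0: "(G has_field_derivative D0) (at 0)" using assms(1) field_differentiable_def by blast
  obtain D1 where D1: "(G has_field_derivative D1) (at 1)" using assms(1) field_differentiable_def by blast
  define h where "h u = (if u = 0 then D0 / of_real pi else if u = 1 then D1 / of_real pi else G (of_real u) * cc u)" for u
  have c: "continuous_on {0..1} h"
  proof (rule continuous_on_IccI)
    have "((\<lambda>u::real. G (of_real u) * cc u) \<longlongrightarrow> D0 / of_real pi) (at_right 0)"
      using lim_G0[OF D0 assms(2)] by (rule filterlim_mono) (auto simp: at_within_le_at)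
    then show "(h \<longlongrightarrow> h 0) (at_right 0)" unfolding h_def[of 0] if_P[OF refl]
      by (rule Lim_transform_eventually) (auto simp: eventually_at h_def intro!: exI[of _ 1])
    have "((\<lambda>u::real. G (of_real u) * cc u) \<longlongrightarrow> D1 / of_real pi) (at_left 1)"
      using lim_G1[OF D1 assms(3)] by (rule filterlim_mono) (auto simp: at_within_le_at)
    moreover have "h 1 = D1 / of_real pi" by (simp add: h_def)
    ultimately show "(h \<longlongrightarrow> h 1) (at_left 1)"
      by (auto elim!: Lim_transform_eventually simp: eventually_at h_def dist_real_def intro!: exI[of _ 1])
  next
    fix x :: real assume x: "0 < x" "x < 1"
    have "sin (pi * x) \<noteq> 0"
    proof
      assume "sin (pi * x) = 0"
      then obtain n :: int where "pi * x = of_int n * pi" by (auto simp: sin_zero_iff_int2)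
      then have "x = of_int n" by simp
      with x show False by auto
    qed
    then have c1: "isCont cc x" unfolding cc_def by (intro continuous_intros) auto
    have "isCont G (of_real x)" using assms(1) by (rule field_differentiable_imp_continuous_at)
    then have "isCont (\<lambda>u. G (of_real u)) x" by (rule isCont_o2[rotated]) (intro continuous_intros)
    then have "isCont (\<lambda>u. G (of_real u) * cc u) x" using c1 by (intro continuous_intros)
    then have "((\<lambda>u. G (of_real u) * cc u) \<longlongrightarrow> h x) (at x)"
      using x by (simp add: isCont_def h_def)
    then show "(h \<longlongrightarrow> h x) (at x)"
      apply (rule Lim_transform_eventually)
      using x by (auto simp: eventually_at h_def intro!: exI[of _ "min x (1 - x)"] simp: dist_real_def)
  qed simp
  show ?thesis by (rule that[OF c]) (auto simp: h_def)
qed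

lemma integral_split_N:
  fixes f :: "real \<Rightarrow> complex"
  assumes f: "f integrable_on {0..1}" and N: "N > 0"
  shows "integral {0..1} f = (\<Sum>k<N. integral {real k / N..real (Suc k) / N} f)"
proof -
  have "m \<le> N \<Longrightarrow> integral {0..real m / N} f = (\<Sum>k<m. integral {real k / N..real (Suc k) / N} f)" for m
  proof (induction m)
    case 0 then show ?case by simp
  next
    case (Suc m)
    have sub: "{0..real (Suc m) / N} \<subseteq> {0..1}" using Suc.prems N by (auto simp: field_simps)
    have "integral {0..real m / N} f + integral {real m / N..real (Suc m) / N} f = integral {0..real (Suc m) / N} f"
      by (rule Henstock_Kurzweil_Integration.integral_combine[OF _ _ integrable_on_subinterval[OF f sub]]) (use N in \<open>auto simp: divide_right_mono\<close>)
    then show ?case using Suc by simp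
  qed
  from this[of N] N show ?thesis by simp
qed

lemma RL_general:
  fixes h :: "real \<Rightarrow> complex" and w :: "nat \<Rightarrow> real \<Rightarrow> real"
  assumes h: "continuous_on {0..1} h"
    and wc: "\<And>N. continuous_on {0..1} (w N)"
    and wb: "\<And>N u. \<bar>w N u\<bar> \<le> 1"
    and w0: "\<And>N k. N > 0 \<Longrightarrow> k < N \<Longrightarrow> integral {real k / N..real (Suc k) / N} (w N) = 0"
  shows "(\<lambda>N. integral {0..1} (\<lambda>u. of_real (w N u) * h u)) \<longlonglongrightarrow> 0"
proof (rule LIMSEQ_I)
  fix r :: real assume r: "r > 0"
  have uc: "uniformly_continuous_on {0..1} h"
    using h by (intro compact_uniformly_continuous) auto
  obtain d where d: "d > 0" "\<And>x x'. x \<in> {0..1} \<Longrightarrow> x' \<in> {0..1} \<Longrightarrow> dist x' x < d \<Longrightarrow> dist (h x') (h x) < r / 2"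
    using uc r unfolding uniformly_continuous_on_def by (metis half_gt_zero)
  obtain N0 :: nat where N0: "1 / d < N0" using reals_Archimedean2 by blast
  show "\<exists>no. \<forall>N\<ge>no. norm (integral {0..1} (\<lambda>u. of_real (w N u) * h u) - 0) < r"
  proof (intro exI allI impI)
    fix N assume NN: "N \<ge> N0 + 1"
    then have Npos: "N > 0" by simp
    have Nd: "1 / real N < d"
    proof -
      have "1 / d < N" using N0 NN by linarith
      then show ?thesis using d(1) Npos by (simp add: field_simps)
    qed
    have intg: "(\<lambda>u. of_real (w N u) * h u) integrable_on {0..1}"
      by (intro integrable_continuous_real continuous_intros wc h)
    have piece: "norm (integral {real k / N..real (Suc k) / N} (\<lambda>u. of_real (w N u) * h u)) \<le> r / 2 / N"
      if k: "k < N" for k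
    proof -
      let ?a = "real k / N" and ?b = "real (Suc k) / N"
      have sub: "{?a..?b} \<subseteq> {0..1}" using k Npos by (auto simp: field_simps)
      have ab: "?a \<le> ?b" using Npos by (simp add: divide_right_mono)
      have iw: "w N integrable_on {?a..?b}"
        by (rule integrable_on_subinterval[OF integrable_continuous_real[OF wc] sub])
      have i1: "(\<lambda>u. of_real (w N u) * h u) integrable_on {?a..?b}"
        by (rule integrable_on_subinterval[OF intg sub])
      have cw: "continuous_on {0..1} (\<lambda>u. complex_of_real (w N u))" by (intro continuous_intros wc)
      have i2: "(\<lambda>u. of_real (w N u) * h ?a) integrable_on {?a..?b}"
        by (rule integrable_on_mult_left[OF integrable_on_subinterval[OF integrable_continuous_real[OF cw] sub]])
      have "integral {?a..?b} (\<lambda>u. of_real (w N u) * h ?a) = of_real (integral {?a..?b} (w N)) * h ?a"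
      proof -
        have "integral {?a..?b} (\<lambda>u. of_real (w N u) * h ?a) = integral {?a..?b} (\<lambda>u. w N u *\<^sub>R h ?a)"
          by (simp add: scaleR_conv_of_real)
        also have "\<dots> = integral {?a..?b} (w N) *\<^sub>R h ?a"
          by (rule integral_unique[OF has_integral_scaleR_left[OF integrable_integral[OF iw]]])
        finally show ?thesis by (simp add: scaleR_conv_of_real)
      qed
      also have "\<dots> = 0" using w0[OF Npos k] by simp
      finally have z: "integral {?a..?b} (\<lambda>u. of_real (w N u) * h ?a) = 0" .
      have e: "integral {?a..?b} (\<lambda>u. of_real (w N u) * (h u - h ?a)) = integral {?a..?b} (\<lambda>u. of_real (w N u) * h u) - integral {?a..?b} (\<lambda>u. of_real (w N u) * h ?a)"
        unfolding right_diff_distrib by (rule integral_diff[OF i1 i2])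
      have "integral {?a..?b} (\<lambda>u. of_real (w N u) * h u) = integral {?a..?b} (\<lambda>u. of_real (w N u) * (h u - h ?a))"
        using e z by simp
      also have "norm \<dots> \<le> integral {?a..?b} (\<lambda>u. r / 2)"
      proof (rule integral_norm_bound_integral)
        show "(\<lambda>u. of_real (w N u) * (h u - h ?a)) integrable_on {?a..?b}"
          using integrable_diff[OF i1 i2] by (simp add: algebra_simps)
        show "(\<lambda>u. r / 2) integrable_on {?a..?b}" by (intro integrable_continuous_real continuous_intros)
        fix u assume u: "u \<in> {?a..?b}"
        have "dist u ?a < d"
        proof -
          have "dist u ?a \<le> ?b - ?a" using u by (auto simp: dist_real_def)
          also have "?b - ?a = 1 / N" by (simp add: add_divide_distrib)
          finally show ?thesis using Nd by linarith
        qed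
        then have "norm (h u - h ?a) < r / 2"
          using d(2)[of ?a u] u sub order_trans[OF _ conjunct1[OF u[simplified]], of 0] by (auto simp: dist_norm)
        moreover have "norm (complex_of_real (w N u)) \<le> 1" using wb[of N u] by simp
        ultimately show "norm (of_real (w N u) * (h u - h ?a)) \<le> r / 2"
          unfolding norm_mult using mult_mono[of "norm (complex_of_real (w N u))" 1 "norm (h u - h ?a)" "r/2"] by auto
      qed
      also have "\<dots> = r / 2 / N" using ab by (simp add: field_simps add_divide_distrib)
      finally show ?thesis .
    qed
    have "norm (integral {0..1} (\<lambda>u. of_real (w N u) * h u)) \<le> (\<Sum>k<N. r / 2 / N)"
      unfolding integral_split_N[OF intg Npos] by (rule order.trans[OF norm_sum sum_mono]) (use piece in auto)
    also have "\<dots> = r / 2" using Npos by simp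
    finally show "norm (integral {0..1} (\<lambda>u. of_real (w N u) * h u) - 0) < r" using r by simp
  qed
qed

lemma ext_cont':
  fixes G :: "complex \<Rightarrow> complex"
  assumes "G holomorphic_on UNIV" "G 0 = 0" "G 1 = 0"
  obtains h where "continuous_on {0..1} h" "\<And>u. 0 < u \<Longrightarrow> u < 1 \<Longrightarrow> h u = G (of_real u) * cc u"
  using ext_cont[of G] assms holomorphic_on_imp_differentiable_at[OF assms(1)] by blast

lemma spike01:
  assumes "\<And>u. 0 < u \<Longrightarrow> u < 1 \<Longrightarrow> f u = g u"
  shows "integral {0..1::real} f = integral {0..1} g"
  by (rule integral_spike[of "{0,1}"]) (use assms in \<open>auto simp: negligible_finite\<close>)

lemma spike01_integrable:
  assumes "\<And>u. 0 < u \<Longrightarrow> u < 1 \<Longrightarrow> f u = g u" "g integrable_on {0..1::real}"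
  shows "f integrable_on {0..1}"
  by (rule integrable_spike_finite[of "{0,1}", OF _ _ assms(2)]) (use assms(1) in auto)

lemma ext_integrable:
  fixes G :: "complex \<Rightarrow> complex"
  assumes "G holomorphic_on UNIV" "G 0 = 0" "G 1 = 0" "continuous_on {0..1} w"
  shows "(\<lambda>u. w u * (G (of_real u) * cc u)) integrable_on {0..1}"
proof -
  obtain h where h: "continuous_on {0..1} h" "\<And>u. 0 < u \<Longrightarrow> u < 1 \<Longrightarrow> h u = G (of_real u) * cc u"
    using ext_cont'[OF assms(1-3)] by blast
  show ?thesis
    by (rule spike01_integrable[of _ "\<lambda>u. w u * h u"]) (use h assms(4) in \<open>auto intro!: integrable_continuous_real continuous_intros\<close>)
qed

lemma ext_integrable1:
  fixes G :: "complex \<Rightarrow> complex"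
  assumes "G holomorphic_on UNIV" "G 0 = 0" "G 1 = 0"
  shows "(\<lambda>u. G (of_real u) * cc u) integrable_on {0..1}"
  using ext_integrable[OF assms, of "\<lambda>_. 1"] by simp

lemma ftc01:
  fixes G g :: "complex \<Rightarrow> complex"
  assumes "\<And>z. (G has_field_derivative g z) (at z)"
  shows "((\<lambda>u. g (of_real u)) has_integral (G 1 - G 0)) {0..1}"
proof -
  have "((\<lambda>u. g (of_real u)) has_integral (G (of_real 1) - G (of_real 0))) {0..1}"
    by (rule fundamental_theorem_of_calculus) (auto intro!: has_vector_derivative_real_field assms)
  then show ?thesis by simp
qed

lemma sin_cot_rec:
  fixes A a :: complex
  assumes "sin a \<noteq> 0"
  shows "(sin (A + 2 * a) - sin A) * (cos a / sin a) = cos (A + 2 * a) + cos A"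
proof -
  have p: "sin a ^ 2 + cos a ^ 2 = 1" by (rule sin_cos_squared_add)
  have "(sin (A + 2 * a) - sin A) * cos a = (cos (A + 2 * a) + cos A) * sin a"
    unfolding sin_add cos_add sin_double cos_double
    using p by algebra
  then show ?thesis using assms by (simp add: field_simps)
qed

lemma cos_cot_rec:
  fixes A a :: complex
  assumes "sin a \<noteq> 0"
  shows "(cos (A + 2 * a) - cos A) * (cos a / sin a) = - (sin (A + 2 * a) + sin A)"
proof -
  have p: "sin a ^ 2 + cos a ^ 2 = 1" by (rule sin_cos_squared_add)
  have "(cos (A + 2 * a) - cos A) * cos a = - (sin (A + 2 * a) + sin A) * sin a"
    unfolding sin_add cos_add sin_double cos_double
    using p by algebra
  then show ?thesis using assms by (simp add: field_simps)
qed

lemma cc_eq: "0 < u \<Longrightarrow> u < 1 \<Longrightarrow> cc u = cos (of_real pi * of_real u) / sin (of_real pi * of_real u)"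
  and sin_pi_u_nz: "0 < u \<Longrightarrow> u < 1 \<Longrightarrow> sin (of_real pi * of_real u :: complex) \<noteq> 0"
proof -
  assume u: "0 < u" "u < 1"
  have "sin (pi * u) \<noteq> 0"
  proof
    assume "sin (pi * u) = 0"
    then obtain n :: int where "pi * u = of_int n * pi" by (auto simp: sin_zero_iff_int2)
    then have "u = of_int n" by simp
    with u show False by auto
  qed
  then show "sin (of_real pi * of_real u :: complex) \<noteq> 0"
    by (metis of_real_eq_0_iff of_real_mult sin_of_real)
  show "cc u = cos (of_real pi * of_real u) / sin (of_real pi * of_real u)"
    by (simp add: cc_def cot_def flip: sin_of_real cos_of_real)
qed

lemma sin2piN: "sin (2 * of_real pi * of_nat N :: complex) = 0"
proof -
  have "(2 * of_real pi * of_nat N :: complex) = of_real (real (2 * N) * pi)" by simp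
  then have "sin (2 * of_real pi * of_nat N :: complex) = of_real (sin (real (2 * N) * pi))"
    by (simp only: sin_of_real)
  then show ?thesis by simp
qed

lemma cos2piN: "cos (2 * of_real pi * of_nat N :: complex) = 1"
proof -
  have "(2 * of_real pi * of_nat N :: complex) = of_real (real (2 * N) * pi)" by simp
  then have "cos (2 * of_real pi * of_nat N :: complex) = of_real (cos (real (2 * N) * pi))"
    by (simp only: cos_of_real)
  then show ?thesis by (simp add: power_mult)
qed

lemma sin_shiftN: "sin (2 * of_real pi * (x + of_nat N) :: complex) = sin (2 * of_real pi * x)"
  by (simp add: distrib_left sin_add sin2piN cos2piN)

lemma cos_shiftN: "cos (2 * of_real pi * (x + of_nat N) :: complex) = cos (2 * of_real pi * x)"
  by (simp add: distrib_left cos_add sin2piN cos2piN)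

lemma int_cos_a:
  fixes a :: complex assumes a: "a \<noteq> 0"
  shows "((\<lambda>u. cos (2 * of_real pi * a * of_real u)) has_integral sin (2 * of_real pi * a) / (2 * of_real pi * a)) {0..1}"
proof -
  have "((\<lambda>u. cos (2 * of_real pi * a * of_real u)) has_integral
     ((\<lambda>z. sin (2 * of_real pi * a * z) / (2 * of_real pi * a)) 1 - (\<lambda>z. sin (2 * of_real pi * a * z) / (2 * of_real pi * a)) 0)) {0..1}"
    by (rule ftc01) (use a in \<open>auto intro!: derivative_eq_intros\<close>)
  then show ?thesis by simp
qed

lemma int_cos_N:
  assumes "N \<ge> 1"
  shows "((\<lambda>u. cos (2 * of_real pi * of_nat N * of_real u) :: complex) has_integral 0) {0..1}"
  using int_cos_a[of "of_nat N"] assms by (simp add: sin2piN)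

lemma int_ucos_N:
  assumes N: "N \<ge> 1"
  shows "((\<lambda>u. of_real u * cos (2 * of_real pi * of_nat N * of_real u) :: complex) has_integral 0) {0..1}"
proof -
  define c where "c = 2 * of_real pi * (of_nat N :: complex)"
  have c: "c \<noteq> 0" using N by (simp add: c_def)
  have "((\<lambda>u. of_real u * cos (c * of_real u)) has_integral
     ((\<lambda>z. z * sin (c * z) / c + cos (c * z) / c^2) 1 - (\<lambda>z. z * sin (c * z) / c + cos (c * z) / c^2) 0)) {0..1}"
  proof (rule ftc01)
    fix z
    show "((\<lambda>z. z * sin (c * z) / c + cos (c * z) / c^2) has_field_derivative z * cos (c * z)) (at z)"
      using c by (auto intro!: derivative_eq_intros simp: field_simps power2_eq_square)
  qed
  moreover have "sin c = 0" "cos c = 1" by (simp_all add: c_def sin2piN cos2piN)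
  ultimately show ?thesis by (simp add: c_def)
qed

lemma int_usin_N:
  assumes N: "N \<ge> 1"
  shows "((\<lambda>u. of_real u * sin (2 * of_real pi * of_nat N * of_real u) :: complex) has_integral - 1 / (2 * of_real pi * of_nat N)) {0..1}"
proof -
  define c where "c = 2 * of_real pi * (of_nat N :: complex)"
  have c: "c \<noteq> 0" using N by (simp add: c_def)
  have "((\<lambda>u. of_real u * sin (c * of_real u)) has_integral
     ((\<lambda>z. - z * cos (c * z) / c + sin (c * z) / c^2) 1 - (\<lambda>z. - z * cos (c * z) / c + sin (c * z) / c^2) 0)) {0..1}"
  proof (rule ftc01)
    fix z
    show "((\<lambda>z. - z * cos (c * z) / c + sin (c * z) / c^2) has_field_derivative z * sin (c * z)) (at z)"
      using c by (auto intro!: derivative_eq_intros simp: field_simps power2_eq_square)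
  qed
  moreover have "sin c = 0" "cos c = 1" by (simp_all add: c_def sin2piN cos2piN)
  ultimately show ?thesis by (simp add: c_def)
qed

definition phi :: "nat \<Rightarrow> complex \<Rightarrow> complex \<Rightarrow> complex" where
  "phi N x z = sin (2 * of_real pi * (x + of_nat N) * z) - z * sin (2 * of_real pi * x) * cos (2 * of_real pi * of_nat N * z)"

definition II :: "nat \<Rightarrow> complex \<Rightarrow> complex" where
  "II N x = integral {0..1} (\<lambda>u. phi N x (of_real u) * cc u)"

lemma phi_holo: "phi N x holomorphic_on UNIV"
  unfolding phi_def by (intro holomorphic_intros)

lemma phi_0: "phi N x 0 = 0" by (simp add: phi_def)
lemma phi_1: "phi N x 1 = 0" by (simp add: phi_def sin_shiftN cos2piN)

lemma phi_integrable: "(\<lambda>u. phi N x (of_real u) * cc u) integrable_on {0..1}"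
  by (rule ext_integrable1[OF phi_holo phi_0 phi_1])

lemma phi_rec_pt:
  assumes u: "0 < u" "u < 1"
  shows "(phi (Suc N) x (of_real u) * cc u - phi N x (of_real u) * cc u) =
    cos (2 * of_real pi * (x + of_nat (Suc N)) * of_real u) + cos (2 * of_real pi * (x + of_nat N) * of_real u)
    + sin (2 * of_real pi * x) * (of_real u * sin (2 * of_real pi * of_nat (Suc N) * of_real u))
    + sin (2 * of_real pi * x) * (of_real u * sin (2 * of_real pi * of_nat N * of_real u))"
proof -
  define a where "a = of_real pi * (of_real u :: complex)"
  define A where "A = 2 * of_real pi * (x + of_nat N) * (of_real u :: complex)"
  define B where "B = 2 * of_real pi * of_nat N * (of_real u :: complex)"
  have sa: "sin a \<noteq> 0" using sin_pi_u_nz[OF u] by (simp add: a_def)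
  have cc: "cc u = cos a / sin a" using cc_eq[OF u] by (simp add: a_def)
  have e1: "2 * of_real pi * (x + of_nat (Suc N)) * of_real u = A + 2 * a" by (simp add: A_def a_def algebra_simps)
  have e2: "2 * of_real pi * of_nat (Suc N) * of_real u = B + 2 * a" by (simp add: B_def a_def algebra_simps)
  have e3: "2 * of_real pi * (x + of_nat N) * of_real u = A" by (simp add: A_def)
  have e4: "2 * of_real pi * of_nat N * of_real u = B" by (simp add: B_def)
  have "phi (Suc N) x (of_real u) * cc u - phi N x (of_real u) * cc u =
      (sin (A + 2 * a) - sin A) * (cos a / sin a) - of_real u * sin (2 * of_real pi * x) * ((cos (B + 2 * a) - cos B) * (cos a / sin a))"
    unfolding phi_def cc e1 e2 e3 e4 by (simp add: algebra_simps)
  also have "\<dots> = cos (A + 2 * a) + cos A + of_real u * sin (2 * of_real pi * x) * (sin (B + 2 * a) + sin B)"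
    unfolding sin_cot_rec[OF sa] cos_cot_rec[OF sa] by (simp add: algebra_simps)
  finally show ?thesis unfolding e1 e2 e3 e4 by (simp add: algebra_simps)
qed

lemma aux_alg:
  fixes s p y n y1 n1 :: complex
  assumes "p \<noteq> 0" "y \<noteq> 0" "y1 \<noteq> 0" "n \<noteq> 0" "n1 \<noteq> 0"
  shows "s / (2 * p * y1) + s / (2 * p * y) + s * (- 1 / (2 * p * n1)) + s * (- 1 / (2 * p * n))
     = s / (2 * p) * (1 / y1 + 1 / y - 1 / n1 - 1 / n)"
  using assms by (simp add: field_simps)

lemma II_rec:
  assumes N: "N \<ge> 1" and x1: "x + of_nat N \<noteq> 0" and x2: "x + of_nat (Suc N) \<noteq> 0"
  shows "II (Suc N) x - II N x = sin (2 * of_real pi * x) / (2 * of_real pi) *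
     (1 / (x + of_nat (Suc N)) + 1 / (x + of_nat N) - 1 / of_nat (Suc N) - 1 / of_nat N)"
proof -
  let ?s = "sin (2 * of_real pi * x)"
  have "II (Suc N) x - II N x = integral {0..1} (\<lambda>u. phi (Suc N) x (of_real u) * cc u - phi N x (of_real u) * cc u)"
    unfolding II_def by (rule integral_diff[symmetric, OF phi_integrable phi_integrable])
  also have "\<dots> = integral {0..1} (\<lambda>u. cos (2 * of_real pi * (x + of_nat (Suc N)) * of_real u) + cos (2 * of_real pi * (x + of_nat N) * of_real u)
    + ?s * (of_real u * sin (2 * of_real pi * of_nat (Suc N) * of_real u))
    + ?s * (of_real u * sin (2 * of_real pi * of_nat N * of_real u)))"
    by (rule spike01) (rule phi_rec_pt)
  also have "\<dots> = ?s / (2 * of_real pi * (x + of_nat (Suc N))) + ?s / (2 * of_real pi * (x + of_nat N))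
      + ?s * (- 1 / (2 * of_real pi * of_nat (Suc N))) + ?s * (- 1 / (2 * of_real pi * of_nat N))"
    apply (rule integral_unique)
    apply (intro has_integral_add has_integral_mult_right)
    using int_cos_a[OF x2] int_cos_a[OF x1] int_usin_N[of "Suc N"] int_usin_N[OF N]
    by (simp_all add: sin_shiftN sin_shiftN[of x "Suc N", simplified])
  also have "\<dots> = ?s / (2 * of_real pi) * (1 / (x + of_nat (Suc N)) + 1 / (x + of_nat N) - 1 / of_nat (Suc N) - 1 / of_nat N)"
  proof -
    have "(of_nat (Suc N) :: complex) \<noteq> 0" by (simp only: of_nat_eq_0_iff)
    then show ?thesis by (intro aux_alg) (use x1 x2 N in auto)
  qed
  finally show ?thesis .
qed

lemma sin_rec_pt:
  assumes u: "0 < u" "u < 1"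
  shows "(sin (2 * of_real pi * of_nat (Suc N) * of_real u) - sin (2 * of_real pi * of_nat N * of_real u)) * cc u
     = cos (2 * of_real pi * of_nat (Suc N) * of_real u) + cos (2 * of_real pi * of_nat N * of_real u)"
proof -
  define a where "a = of_real pi * (of_real u :: complex)"
  define B where "B = 2 * of_real pi * of_nat N * (of_real u :: complex)"
  have sa: "sin a \<noteq> 0" using sin_pi_u_nz[OF u] by (simp add: a_def)
  have cc: "cc u = cos a / sin a" using cc_eq[OF u] by (simp add: a_def)
  have e2: "2 * of_real pi * of_nat (Suc N) * of_real u = B + 2 * a" by (simp add: B_def a_def algebra_simps)
  show ?thesis unfolding e2 B_def[symmetric] cc by (rule sin_cot_rec[OF sa])
qed

lemma sinN_integrable: "(\<lambda>u. sin (2 * of_real pi * of_nat N * of_real u) * cc u) integrable_on {0..1}"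
  using ext_integrable1[of "\<lambda>z. sin (2 * of_real pi * of_nat N * z)"]
  by (auto intro!: holomorphic_intros simp: sin2piN)

lemma usinN_integrable: "(\<lambda>u. of_real u * sin (2 * of_real pi * of_nat N * of_real u) * cc u) integrable_on {0..1}"
proof -
  have "(\<lambda>z. z * sin (2 * of_real pi * of_nat N * z)) holomorphic_on UNIV"
    by (intro holomorphic_on_mult holomorphic_intros holomorphic_on_id)
  then show ?thesis using ext_integrable1[of "\<lambda>z. z * sin (2 * of_real pi * of_nat N * z)"] by (simp add: sin2piN)
qed

lemma TT: "N \<ge> 1 \<Longrightarrow> integral {0..1} (\<lambda>u. sin (2 * of_real pi * of_nat N * of_real u) * cc u) = 1"
proof (induction N rule: dec_induct)
  case base
  have "integral {0..1} (\<lambda>u. sin (2 * of_real pi * of_nat (Suc 0) * of_real u) * cc u) - integral {0..1} (\<lambda>u. sin (2 * of_real pi * of_nat 0 * of_real u) * cc u)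
     = integral {0..1} (\<lambda>u. sin (2 * of_real pi * of_nat (Suc 0) * of_real u) * cc u - sin (2 * of_real pi * of_nat 0 * of_real u) * cc u)"
    by (rule integral_diff[OF sinN_integrable sinN_integrable, symmetric])
  also have "\<dots> = integral {0..1} (\<lambda>u. cos (2 * of_real pi * of_nat (Suc 0) * of_real u) + cos (2 * of_real pi * of_nat 0 * of_real u))"
    by (rule spike01) (subst sin_rec_pt[symmetric], assumption+, simp add: algebra_simps)
  also have "\<dots> = 0 + 1"
    by (rule integral_unique, rule has_integral_add) (use int_cos_N[of 1] has_integral_const_real[of "1::complex" 0 1] in auto)
  finally show ?case by simp
next
  case (step N)
  have "integral {0..1} (\<lambda>u. sin (2 * of_real pi * of_nat (Suc N) * of_real u) * cc u) - integral {0..1} (\<lambda>u. sin (2 * of_real pi * of_nat N * of_real u) * cc u)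
     = integral {0..1} (\<lambda>u. sin (2 * of_real pi * of_nat (Suc N) * of_real u) * cc u - sin (2 * of_real pi * of_nat N * of_real u) * cc u)"
    by (rule integral_diff[OF sinN_integrable sinN_integrable, symmetric])
  also have "\<dots> = integral {0..1} (\<lambda>u. cos (2 * of_real pi * of_nat (Suc N) * of_real u) + cos (2 * of_real pi * of_nat N * of_real u))"
    by (rule spike01) (subst sin_rec_pt[symmetric], assumption+, simp add: algebra_simps)
  also have "\<dots> = 0 + 0"
    by (rule integral_unique, rule has_integral_add) (use int_cos_N[of "Suc N"] int_cos_N[of N] step in auto)
  finally show ?case using step by simp
qed

lemma UT: "N \<ge> 1 \<Longrightarrow> integral {0..1} (\<lambda>u. of_real u * sin (2 * of_real pi * of_nat N * of_real u) * cc u) = 1/2"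
proof (induction N rule: dec_induct)
  case base
  have "integral {0..1} (\<lambda>u. of_real u * sin (2 * of_real pi * of_nat (Suc 0) * of_real u) * cc u) - integral {0..1} (\<lambda>u. of_real u * sin (2 * of_real pi * of_nat 0 * of_real u) * cc u)
     = integral {0..1} (\<lambda>u. of_real u * sin (2 * of_real pi * of_nat (Suc 0) * of_real u) * cc u - of_real u * sin (2 * of_real pi * of_nat 0 * of_real u) * cc u)"
    by (rule integral_diff[OF usinN_integrable usinN_integrable, symmetric])
  also have "\<dots> = integral {0..1} (\<lambda>u. of_real u * cos (2 * of_real pi * of_nat (Suc 0) * of_real u) + of_real u * cos (2 * of_real pi * of_nat 0 * of_real u))"
    by (rule spike01) (subst (1 2) mult.assoc, subst distrib_left[symmetric], subst sin_rec_pt[symmetric], assumption+, simp add: algebra_simps)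
  also have "\<dots> = 0 + 1/2"
  proof (rule integral_unique, rule has_integral_add)
    show "((\<lambda>u. complex_of_real u * cos (2 * complex_of_real pi * of_nat (Suc 0) * complex_of_real u)) has_integral 0) {0..1}"
      using int_ucos_N[of 1] by simp
    have "((\<lambda>u. of_real u :: complex) has_integral ((\<lambda>z. z^2/2) 1 - (\<lambda>z. z^2/2) 0)) {0..1}"
      by (rule ftc01) (auto intro!: derivative_eq_intros)
    then show "((\<lambda>u. complex_of_real u * cos (2 * complex_of_real pi * of_nat 0 * complex_of_real u)) has_integral 1/2) {0..1}"
      by simp
  qed
  finally show ?case by simp
next
  case (step N)
  have "integral {0..1} (\<lambda>u. of_real u * sin (2 * of_real pi * of_nat (Suc N) * of_real u) * cc u) - integral {0..1} (\<lambda>u. of_real u * sin (2 * of_real pi * of_nat N * of_real u) * cc u)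
     = integral {0..1} (\<lambda>u. of_real u * sin (2 * of_real pi * of_nat (Suc N) * of_real u) * cc u - of_real u * sin (2 * of_real pi * of_nat N * of_real u) * cc u)"
    by (rule integral_diff[OF usinN_integrable usinN_integrable, symmetric])
  also have "\<dots> = integral {0..1} (\<lambda>u. of_real u * cos (2 * of_real pi * of_nat (Suc N) * of_real u) + of_real u * cos (2 * of_real pi * of_nat N * of_real u))"
    by (rule spike01) (subst (1 2) mult.assoc, subst distrib_left[symmetric], subst sin_rec_pt[symmetric], assumption+, simp add: algebra_simps)
  also have "\<dots> = 0 + 0"
    by (rule integral_unique, rule has_integral_add) (use int_ucos_N[of "Suc N"] int_ucos_N[of N] step in auto)
  finally show ?case using step by simp
qed

lemma two_pi_k: "N > 0 \<Longrightarrow> 2 * pi * real N * (real k / real N) = real (2 * k) * pi"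
  by (simp add: field_simps)

lemma w_cos0:
  assumes N: "N > 0"
  shows "integral {real k / N..real (Suc k) / N} (\<lambda>u. cos (2 * pi * real N * u)) = 0"
proof -
  let ?f = "\<lambda>u. sin (2 * pi * real N * u) / (2 * pi * real N)"
  have hi: "((\<lambda>u. cos (2 * pi * real N * u)) has_integral (?f (real (Suc k) / N) - ?f (real k / N))) {real k / N..real (Suc k) / N}"
  proof (rule fundamental_theorem_of_calculus)
    show "real k / real N \<le> real (Suc k) / real N" using N by (simp add: divide_right_mono)
    fix u
    have "(?f has_real_derivative cos (2 * pi * real N * u)) (at u)"
      using N by (auto intro!: derivative_eq_intros)
    then show "(?f has_vector_derivative cos (2 * pi * real N * u)) (at u within {real k / real N..real (Suc k) / real N})"
      by (simp add: has_real_derivative_iff_has_vector_derivative[symmetric] has_field_derivative_at_within)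
  qed
  have f: "?f (real (Suc k) / N) = 0" "?f (real k / N) = 0"
    by (simp_all only: two_pi_k[OF N] sin_npi)
  from integral_unique[OF hi] show ?thesis by (simp only: f diff_self)
qed

lemma w_sin0:
  assumes N: "N > 0"
  shows "integral {real k / N..real (Suc k) / N} (\<lambda>u. sin (2 * pi * real N * u)) = 0"
proof -
  let ?f = "\<lambda>u. - cos (2 * pi * real N * u) / (2 * pi * real N)"
  have hi: "((\<lambda>u. sin (2 * pi * real N * u)) has_integral (?f (real (Suc k) / N) - ?f (real k / N))) {real k / N..real (Suc k) / N}"
  proof (rule fundamental_theorem_of_calculus)
    show "real k / real N \<le> real (Suc k) / real N" using N by (simp add: divide_right_mono)
    fix u
    have "(?f has_real_derivative sin (2 * pi * real N * u)) (at u)"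
      using N by (auto intro!: derivative_eq_intros)
    then show "(?f has_vector_derivative sin (2 * pi * real N * u)) (at u within {real k / real N..real (Suc k) / real N})"
      by (simp add: has_real_derivative_iff_has_vector_derivative[symmetric] has_field_derivative_at_within)
  qed
  have f: "?f (real (Suc k) / N) = - 1 / (2 * pi * real N)" "?f (real k / N) = - 1 / (2 * pi * real N)"
    by (simp_all only: two_pi_k[OF N] cos_npi) (simp_all add: power_mult)
  from integral_unique[OF hi] show ?thesis by (simp only: f diff_self)
qed

lemma RL_cos: fixes h :: "real \<Rightarrow> complex" assumes "continuous_on {0..1} h" shows "(\<lambda>N. integral {0..1} (\<lambda>u. of_real (cos (2 * pi * real N * u)) * h u)) \<longlonglongrightarrow> 0"
proof -
  have c: "\<And>N. continuous_on {0..1} (\<lambda>u. cos (2 * pi * real N * u))" by (intro continuous_intros)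
  show ?thesis using RL_general[where w="\<lambda>N u. cos (2 * pi * real N * u)", OF assms c _ w_cos0] by auto
qed

lemma RL_sin: fixes h :: "real \<Rightarrow> complex" assumes "continuous_on {0..1} h" shows "(\<lambda>N. integral {0..1} (\<lambda>u. of_real (sin (2 * pi * real N * u)) * h u)) \<longlonglongrightarrow> 0"
proof -
  have c: "\<And>N. continuous_on {0..1} (\<lambda>u. sin (2 * pi * real N * u))" by (intro continuous_intros)
  show ?thesis using RL_general[where w="\<lambda>N u. sin (2 * pi * real N * u)", OF assms c _ w_sin0] by auto
qed

lemma decomp_pt:
  assumes u: "0 < u" "u < 1"
  shows "phi N x (of_real u) * cc u =
    of_real (cos (2 * pi * real N * u)) * ((sin (2 * of_real pi * x * of_real u) - of_real u * sin (2 * of_real pi * x)) * cc u)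
  + of_real (sin (2 * pi * real N * u)) * ((cos (2 * of_real pi * x * of_real u) - 1 - (cos (2 * of_real pi * x) - 1) * of_real u) * cc u)
  + sin (2 * of_real pi * of_nat N * of_real u) * cc u
  + (cos (2 * of_real pi * x) - 1) * (of_real u * sin (2 * of_real pi * of_nat N * of_real u) * cc u)"
proof -
  have c: "of_real (cos (2 * pi * real N * u)) = cos (2 * of_real pi * of_nat N * (of_real u :: complex))"
    by (simp flip: cos_of_real)
  have s: "of_real (sin (2 * pi * real N * u)) = sin (2 * of_real pi * of_nat N * (of_real u :: complex))"
    by (simp flip: sin_of_real)
  have e: "2 * of_real pi * (x + of_nat N) * of_real u = 2 * of_real pi * x * of_real u + 2 * of_real pi * of_nat N * (of_real u :: complex)"
    by (simp add: algebra_simps)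
  have p: "phi N x (of_real u) = sin (2 * of_real pi * x * of_real u) * cos (2 * of_real pi * of_nat N * of_real u)
     + cos (2 * of_real pi * x * of_real u) * sin (2 * of_real pi * of_nat N * of_real u)
     - of_real u * sin (2 * of_real pi * x) * cos (2 * of_real pi * of_nat N * of_real u)"
    unfolding phi_def e sin_add by (rule refl)
  show ?thesis unfolding c s p by algebra
qed

lemma II_lim: "(\<lambda>N. II N x) \<longlonglongrightarrow> (1 + cos (2 * of_real pi * x)) / 2"
proof -
  define s where "s = sin (2 * of_real pi * x)"
  define c where "c = cos (2 * of_real pi * x)"
  define K where "K z = sin (2 * of_real pi * x * z) - z * s" for z
  define M where "M z = cos (2 * of_real pi * x * z) - 1 - (c - 1) * z" for z
  have Kh: "K holomorphic_on UNIV" unfolding K_def by (intro holomorphic_intros holomorphic_on_mult holomorphic_on_id)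
  have Mh: "M holomorphic_on UNIV" unfolding M_def by (intro holomorphic_intros holomorphic_on_mult holomorphic_on_id)
  obtain hK where hK: "continuous_on {0..1} hK" "\<And>u. 0 < u \<Longrightarrow> u < 1 \<Longrightarrow> hK u = K (of_real u) * cc u"
    using ext_cont'[OF Kh] by (auto simp: K_def s_def)
  obtain hM where hM: "continuous_on {0..1} hM" "\<And>u. 0 < u \<Longrightarrow> u < 1 \<Longrightarrow> hM u = M (of_real u) * cc u"
    using ext_cont'[OF Mh] by (auto simp: M_def c_def)
  let ?A = "\<lambda>N. integral {0..1} (\<lambda>u. of_real (cos (2 * pi * real N * u)) * hK u)"
  let ?B = "\<lambda>N. integral {0..1} (\<lambda>u. of_real (sin (2 * pi * real N * u)) * hM u)"
  have eq: "II N x = ?A N + ?B N + 1 + (c - 1) * (1/2)" if N: "N \<ge> 1" for N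
  proof -
    have "II N x = integral {0..1} (\<lambda>u. of_real (cos (2 * pi * real N * u)) * hK u + of_real (sin (2 * pi * real N * u)) * hM u
        + sin (2 * of_real pi * of_nat N * of_real u) * cc u + (c - 1) * (of_real u * sin (2 * of_real pi * of_nat N * of_real u) * cc u))"
      unfolding II_def by (rule spike01) (simp add: decomp_pt hK hM K_def M_def c_def s_def)
    also have "\<dots> = ?A N + ?B N + 1 + (c - 1) * (1/2)"
    proof (rule integral_unique)
      have i1: "((\<lambda>u. of_real (cos (2 * pi * real N * u)) * hK u) has_integral ?A N) {0..1}"
        by (rule integrable_integral) (intro integrable_continuous_real continuous_intros hK(1))
      have i2: "((\<lambda>u. of_real (sin (2 * pi * real N * u)) * hM u) has_integral ?B N) {0..1}"
        by (rule integrable_integral) (intro integrable_continuous_real continuous_intros hM(1))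
      have i3: "((\<lambda>u. sin (2 * of_real pi * of_nat N * of_real u) * cc u) has_integral 1) {0..1}"
        using integrable_integral[OF sinN_integrable[of N]] TT[OF N] by simp
      have i4: "((\<lambda>u. of_real u * sin (2 * of_real pi * of_nat N * of_real u) * cc u) has_integral 1/2) {0..1}"
        using integrable_integral[OF usinN_integrable[of N]] UT[OF N] by simp
      show "((\<lambda>u. of_real (cos (2 * pi * real N * u)) * hK u + of_real (sin (2 * pi * real N * u)) * hM u
        + sin (2 * of_real pi * of_nat N * of_real u) * cc u + (c - 1) * (of_real u * sin (2 * of_real pi * of_nat N * of_real u) * cc u))
        has_integral (?A N + ?B N + 1 + (c - 1) * (1/2))) {0..1}"
        by (rule has_integral_add[OF has_integral_add[OF has_integral_add[OF i1 i2] i3] has_integral_mult_right[OF i4]])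
    qed
    finally show ?thesis .
  qed
  have "(\<lambda>N. ?A N + ?B N + 1 + (c - 1) * (1/2)) \<longlonglongrightarrow> 0 + 0 + 1 + (c - 1) * (1/2)"
    by (intro tendsto_intros RL_cos RL_sin hK hM)
  then have "(\<lambda>N. II N x) \<longlonglongrightarrow> 0 + 0 + 1 + (c - 1) * (1/2)"
    by (rule Lim_transform_eventually) (use eq in \<open>auto simp: eventually_at_top_linorder intro!: exI[of _ 1]\<close>)
  then show ?thesis by (simp add: c_def field_simps)
qed

definition gg :: "complex \<Rightarrow> nat \<Rightarrow> complex" where
  "gg z k = inverse (of_nat (Suc k)) - inverse (z + of_nat k)"

definition TT' :: "complex \<Rightarrow> nat \<Rightarrow> complex" where
  "TT' z n = (\<Sum>k. gg z (k + n))"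

lemma gg_summable: "z \<noteq> 0 \<Longrightarrow> summable (gg z)"
  unfolding gg_def by (rule summable_Digamma)

lemma TT'_eq: "z \<noteq> 0 \<Longrightarrow> TT' z n = suminf (gg z) - (\<Sum>k<n. gg z k)"
  using suminf_split_initial_segment[OF gg_summable, of z n] by (simp add: TT'_def)

lemma TT'_Suc: "z \<noteq> 0 \<Longrightarrow> TT' z (Suc n) = TT' z n - gg z n"
  by (simp add: TT'_eq)

lemma TT'_lim: "z \<noteq> 0 \<Longrightarrow> TT' z \<longlonglongrightarrow> 0"
proof -
  assume z: "z \<noteq> 0"
  have "(\<lambda>n. suminf (gg z) - (\<Sum>k<n. gg z k)) \<longlonglongrightarrow> suminf (gg z) - suminf (gg z)"
    by (intro tendsto_intros summable_LIMSEQ gg_summable z)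
  moreover have "TT' z = (\<lambda>n. suminf (gg z) - (\<Sum>k<n. gg z k))" by (rule ext) (rule TT'_eq[OF z])
  ultimately show ?thesis by simp
qed

lemma not_Int_nz:
  assumes "x \<notin> \<int>" shows "x + of_nat n \<noteq> (0::complex)"
proof
  assume "x + of_nat n = 0"
  then have "x = - of_nat n" by (simp add: eq_neg_iff_add_eq_0)
  then have "x \<in> \<int>" by simp
  with assms show False by simp
qed

lemma II_closed:
  assumes x: "x \<notin> \<int>"
  shows "II (Suc n) x = (1 + cos (2 * of_real pi * x)) / 2
     + sin (2 * of_real pi * x) / (2 * of_real pi) * (2 * TT' (1 + x) n - gg (1 + x) n)"
proof -
  define s where "s = sin (2 * of_real pi * x)"
  define c where "c = cos (2 * of_real pi * x)"
  have z: "1 + x \<noteq> 0" using not_Int_nz[OF x, of 1] by (simp add: add.commute)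
  define V where "V n = (1 + c) / 2 + s / (2 * of_real pi) * (2 * TT' (1 + x) n - gg (1 + x) n)" for n
  define D where "D n = II (Suc n) x - V n" for n
  have gg_eq: "gg (1 + x) n = 1 / of_nat (Suc n) - 1 / (x + of_nat (Suc n))" for n
    by (simp add: gg_def divide_inverse add_ac)
  have step: "D (Suc n) = D n" for n
  proof -
    have r: "II (Suc (Suc n)) x - II (Suc n) x = s / (2 * of_real pi) *
      (1 / (x + of_nat (Suc (Suc n))) + 1 / (x + of_nat (Suc n)) - 1 / of_nat (Suc (Suc n)) - 1 / of_nat (Suc n))"
      unfolding s_def by (rule II_rec[OF _ not_Int_nz[OF x] not_Int_nz[OF x]]) simp
    have "V (Suc n) - V n = s / (2 * of_real pi) * (2 * (TT' (1 + x) (Suc n) - TT' (1 + x) n) - gg (1 + x) (Suc n) + gg (1 + x) n)"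
      by (simp add: V_def algebra_simps)
    also have "\<dots> = s / (2 * of_real pi) * (- gg (1 + x) n - gg (1 + x) (Suc n))"
      by (simp add: TT'_Suc[OF z])
    also have "\<dots> = II (Suc (Suc n)) x - II (Suc n) x"
      unfolding r gg_eq by (simp add: algebra_simps)
    finally show ?thesis by (simp add: D_def algebra_simps)
  qed
  have const: "D n = D 0" for n by (induction n) (simp_all add: step)
  have "(\<lambda>n. II (Suc n) x) \<longlonglongrightarrow> (1 + c) / 2"
    using II_lim[of x] unfolding c_def by (rule LIMSEQ_Suc)
  moreover have "V \<longlonglongrightarrow> (1 + c) / 2 + s / (2 * of_real pi) * (2 * 0 - 0)"
    unfolding V_def by (intro tendsto_intros TT'_lim z summable_LIMSEQ_zero gg_summable)
  ultimately have "D \<longlonglongrightarrow> (1 + c) / 2 - ((1 + c) / 2 + s / (2 * of_real pi) * (2 * 0 - 0))"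
    unfolding D_def by (intro tendsto_intros)
  then have "D \<longlonglongrightarrow> 0" by simp
  moreover have "D \<longlonglongrightarrow> D 0"
    by (rule Lim_transform_eventually[OF tendsto_const]) (intro always_eventually allI, rule const[symmetric])
  ultimately have "D 0 = 0" using LIMSEQ_unique by blast
  then have "D n = 0" using const by simp
  then show ?thesis by (simp add: D_def V_def s_def c_def)
qed

definition Sc :: "complex \<Rightarrow> complex" where "Sc z = (if z = 0 then 1 else sin z / z)"

lemma Sc_mult: "z * Sc z = sin z" by (simp add: Sc_def)

lemma isCont_Sc: "isCont Sc z"
proof (cases "z = 0")
  case True
  have "(Sc has_field_derivative 0) (at 0)"
    using has_field_derivative_sin_z_over_z[of UNIV] unfolding Sc_def[abs_def] by simp
  then show ?thesis using True DERIV_isCont by blast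
next
  case False
  have "isCont (\<lambda>z. sin z / z) z" using False by (intro continuous_intros) auto
  moreover have "eventually (\<lambda>w. sin w / w = Sc w) (nhds z)"
    using eventually_nhds_in_open[of "-{0}" z] False
    by (auto elim!: eventually_mono simp: Sc_def)
  ultimately show ?thesis using isCont_cong[of "\<lambda>z. sin z / z" Sc z] by simp
qed

lemma continuous_on_Sc [continuous_intros]: "continuous_on S f \<Longrightarrow> continuous_on S (\<lambda>x. Sc (f x))"
  by (rule continuous_on_compose2[OF continuous_at_imp_continuous_on[of UNIV Sc]]) (auto intro: isCont_Sc)

definition Bq :: "nat \<Rightarrow> complex \<Rightarrow> real \<Rightarrow> complex" where
  "Bq N x u = cos (2 * of_real pi * x) * (- 2 * sin (of_real pi * (x + 2 * of_nat N) * of_real (1 - u)) * (of_real pi * x) * Sc (of_real pi * x * of_real (1 - u)))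
     + sin (2 * of_real pi * x) * (2 * of_real pi * (x + of_nat N)) * Sc (2 * of_real pi * (x + of_nat N) * of_real (1 - u))"

lemma cos_shiftN': "cos (Y + 2 * of_real pi * of_nat N :: complex) = cos Y"
  by (simp add: cos_add sin2piN cos2piN)

lemma Bq_eq: "Bq N x u * of_real (1 - u) = cos (2 * of_real pi * (x + of_nat N) * of_real u) - cos (2 * of_real pi * x) * cos (2 * of_real pi * of_nat N * of_real u)"
proof -
  define v where "v = (of_real (1 - u) :: complex)"
  define a where "a = of_real pi * x * v"
  define b where "b = of_real pi * of_nat N * v"
  define X where "X = 2 * of_real pi * x"
  have u: "(of_real u :: complex) = 1 - v" by (simp add: v_def)
  have e1: "of_real pi * (x + 2 * of_nat N) * v = a + 2 * b" by (simp add: a_def b_def algebra_simps)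
  have e2: "2 * of_real pi * (x + of_nat N) * v = 2 * a + 2 * b" by (simp add: a_def b_def algebra_simps)
  have "Bq N x u * v = cos X * (- 2 * sin (a + 2 * b) * ((of_real pi * x * v) * Sc (of_real pi * x * v)))
     + sin X * ((2 * of_real pi * (x + of_nat N) * v) * Sc (2 * of_real pi * (x + of_nat N) * v))"
    unfolding Bq_def v_def[symmetric] X_def e1 by (simp add: algebra_simps)
  also have "\<dots> = cos X * (- 2 * sin (a + 2 * b) * sin a) + sin X * sin (2 * a + 2 * b)"
    unfolding Sc_mult a_def[symmetric] e2 by simp
  also have "\<dots> = cos X * (cos (2 * a + 2 * b) - cos (2 * b)) + sin X * sin (2 * a + 2 * b)"
    unfolding mult.assoc[of _ "sin (a + 2 * b)"] sin_times_sin by (simp add: field_simps)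
  also have "\<dots> = cos (X - (2 * a + 2 * b)) - cos X * cos (2 * b)"
    by (simp add: cos_diff algebra_simps)
  also have "cos (X - (2 * a + 2 * b)) = cos (2 * of_real pi * (x + of_nat N) * of_real u)"
  proof -
    have "2 * of_real pi * (x + of_nat N) * of_real u = (X - (2 * a + 2 * b)) + 2 * of_real pi * of_nat N"
      unfolding u by (simp add: X_def a_def b_def algebra_simps)
    then show ?thesis by (simp add: cos_shiftN')
  qed
  also have "cos (2 * b) = cos (2 * of_real pi * of_nat N * of_real u)"
  proof -
    have "2 * of_real pi * of_nat N * of_real u = - (2 * b) + 2 * of_real pi * of_nat N"
      unfolding u by (simp add: b_def algebra_simps)
    then show ?thesis using cos_shiftN'[of "- (2 * b)" N] by simp
  qed
  finally show ?thesis by (simp add: v_def X_def)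
qed

lemma Bq_0: "Bq N x 0 = 1 - cos (2 * of_real pi * x)"
  using Bq_eq[of N x 0] by simp

lemma Bq_1: "Bq N x 1 = sin (2 * of_real pi * x) * (2 * of_real pi * (x + of_nat N))"
  by (simp add: Bq_def Sc_def)

lemma phi_deriv: "((\<lambda>x. phi N x z) has_field_derivative
   2 * of_real pi * z * (cos (2 * of_real pi * (x + of_nat N) * z) - cos (2 * of_real pi * x) * cos (2 * of_real pi * of_nat N * z))) (at x)"
  unfolding phi_def by (auto intro!: derivative_eq_intros simp: algebra_simps)

lemma II_holo: "(\<lambda>x. II N x) holomorphic_on UNIV"
proof -
  have Gh: "(\<lambda>z::complex. z * (1 - z)) holomorphic_on UNIV" by (intro holomorphic_intros holomorphic_on_mult holomorphic_on_id)
  obtain hR where hR: "continuous_on {0..1} hR" "\<And>u. 0 < u \<Longrightarrow> u < 1 \<Longrightarrow> hR u = (of_real u * (1 - of_real u)) * cc u"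
    using ext_cont'[OF Gh] by auto
  define E0 where "E0 x = 2 * of_real pi * x - sin (2 * of_real pi * x)" for x :: complex
  define E1 where "E1 x = sin (2 * of_real pi * x) - 2 * of_real pi * (x + of_nat N) * cos (2 * of_real pi * x)" for x :: complex
  define F where "F x u = (if u = 0 then hR 0 * E0 x else if u = 1 then hR 1 * E1 x else phi N x (of_real u) * cc u)" for x u
  define fx where "fx x u = 2 * of_real pi * Bq N x u * hR u" for x u
  have "(\<lambda>x. integral (cbox 0 1) (F x)) holomorphic_on UNIV"
  proof (rule leibniz_rule_holomorphic[where fx = fx])
    fix x :: complex and t :: real assume t: "t \<in> cbox 0 1"
    show "((\<lambda>x. F x t) has_field_derivative fx x t) (at x within UNIV)"
    proof (cases "t = 0 \<or> t = 1")
      case True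
      then show ?thesis
      proof
        assume t0: "t = 0"
        have "((\<lambda>x. hR 0 * E0 x) has_field_derivative hR 0 * (2 * of_real pi - cos (2 * of_real pi * x) * (2 * of_real pi))) (at x)"
          unfolding E0_def by (auto intro!: derivative_eq_intros)
        then show ?thesis using t0 by (simp add: F_def fx_def Bq_0 algebra_simps)
      next
        assume t1: "t = 1"
        have "((\<lambda>x. hR 1 * E1 x) has_field_derivative hR 1 * (2 * of_real pi * (x + of_nat N) * (sin (2 * of_real pi * x) * (2 * of_real pi)))) (at x)"
          unfolding E1_def by (auto intro!: derivative_eq_intros simp: algebra_simps)
        then show ?thesis using t1 by (simp add: F_def fx_def Bq_1 algebra_simps)
      qed
    next
      case False
      then have t': "0 < t" "t < 1" using t by (auto simp: cbox_interval)
      have ev: "(\<lambda>x. F x t) = (\<lambda>x. phi N x (of_real t) * cc t)" using False by (auto simp: F_def)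
      have d: "((\<lambda>x. phi N x (of_real t) * cc t) has_field_derivative
          2 * of_real pi * of_real t * (cos (2 * of_real pi * (x + of_nat N) * of_real t) - cos (2 * of_real pi * x) * cos (2 * of_real pi * of_nat N * of_real t)) * cc t) (at x)"
        by (rule DERIV_cmult_right[OF phi_deriv])
      have "fx x t = 2 * of_real pi * of_real t * (Bq N x t * of_real (1 - t)) * cc t"
        unfolding fx_def hR(2)[OF t'] by (simp add: algebra_simps)
      also have "\<dots> = 2 * of_real pi * of_real t * (cos (2 * of_real pi * (x + of_nat N) * of_real t) - cos (2 * of_real pi * x) * cos (2 * of_real pi * of_nat N * of_real t)) * cc t"
        unfolding Bq_eq ..
      finally show ?thesis using d ev by simp
    qed
  next
    fix x :: complex
    show "F x integrable_on cbox 0 1"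
      unfolding cbox_interval by (rule spike01_integrable[OF _ phi_integrable]) (auto simp: F_def)
  next
    show "continuous_on (UNIV \<times> cbox 0 1) (\<lambda>(x, t). fx x t)"
    proof -
      have c1: "continuous_on (UNIV \<times> cbox 0 1) (\<lambda>p. hR (snd p))"
        by (rule continuous_on_compose2[OF hR(1) continuous_on_snd]) (auto simp: cbox_interval)
      have c2: "continuous_on (UNIV \<times> cbox 0 1) (\<lambda>p::complex \<times> real. Bq N (fst p) (snd p))"
        unfolding Bq_def by (intro continuous_intros)
      show ?thesis unfolding fx_def case_prod_beta by (intro continuous_intros c1 c2)
    qed
  qed auto
  moreover have "integral (cbox 0 1) (F x) = II N x" for x
    unfolding II_def cbox_interval by (rule spike01) (auto simp: F_def)
  ultimately show ?thesis by simp
qed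

definition JJ :: "nat \<Rightarrow> nat set" where "JJ N = {j. 1 \<le> j \<and> j \<noteq> N}"
definition tt :: "nat \<Rightarrow> nat \<Rightarrow> complex" where "tt N j = 1 / of_int (int j - int N)"

lemma bound_summable: "(\<lambda>j. 1 / (real_of_int (int j - int N))^2) summable_on JJ N"
proof -
  define f where "f j = 1 / (real_of_int (int j - int N))^2" for j
  have "summable (\<lambda>n. inverse (real (Suc n) ^ 2))"
    using inverse_power_summable[of 2, where 'a=real] by (subst summable_Suc_iff) simp
  moreover have "f (n + Suc N) = inverse (real (Suc n) ^ 2)" for n
    by (simp add: f_def divide_inverse of_nat_add)
  ultimately have "summable (\<lambda>n. f (n + Suc N))" by simp
  then have "summable f" by (subst (asm) summable_iff_shift)
  moreover have "f j \<ge> 0" for j by (simp add: f_def)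
  ultimately have "f summable_on UNIV" by (intro norm_summable_imp_summable_on) simp
  then show ?thesis unfolding f_def[symmetric] by (rule summable_on_subset_banach) simp
qed

lemma tt_norm:
  assumes "j \<in> JJ N"
  shows "norm (tt N j) \<le> 1" "norm (tt N j) ^ 2 = 1 / (real_of_int (int j - int N))^2"
proof -
  have m: "int j - int N \<noteq> 0" using assms by (auto simp: JJ_def)
  then have "\<bar>real_of_int (int j - int N)\<bar> \<ge> 1" by linarith
  moreover have n: "norm (of_int (int j - int N) :: complex) = \<bar>real_of_int (int j - int N)\<bar>" by (rule norm_of_int)
  ultimately show "norm (tt N j) \<le> 1" unfolding tt_def norm_divide by (simp del: of_int_diff)
  show "norm (tt N j) ^ 2 = 1 / (real_of_int (int j - int N))^2"
    unfolding tt_def norm_divide n by (simp add: power_divide del: of_int_diff)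
qed

lemma tt_pow_summable:
  assumes k: "k \<ge> 2"
  shows "(\<lambda>j. (tt N j) ^ k) summable_on JJ N"
proof -
  have "(\<lambda>j. norm ((tt N j) ^ k)) summable_on JJ N"
  proof (rule summable_on_comparison_test[OF bound_summable])
    fix j assume j: "j \<in> JJ N"
    obtain d where d: "k = 2 + d" using k le_Suc_ex by blast
    have "norm ((tt N j) ^ k) = norm (tt N j) ^ 2 * norm (tt N j) ^ (k - 2)"
      unfolding d by (simp add: power_add norm_mult norm_power power2_eq_square)
    also have "\<dots> \<le> norm (tt N j) ^ 2 * 1"
      using tt_norm(1)[OF j] by (intro mult_left_mono power_le_one) auto
    finally show "norm ((tt N j) ^ k) \<le> 1 / (real_of_int (int j - int N))^2" using tt_norm(2)[OF j] by simp
  qed simp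
  then show ?thesis using summable_on_iff_abs_summable_on_complex by blast
qed

lemma geo_has_sum:
  fixes w :: "'a :: {real_normed_field, banach}"
  assumes w: "norm w < 1"
  shows "((\<lambda>k. w ^ (k + 2)) has_sum w^2 / (1 - w)) UNIV"
proof (rule norm_summable_imp_has_sum)
  have "summable (\<lambda>k. norm w ^ 2 * norm w ^ k)"
    by (intro summable_mult summable_geometric) (use w in simp)
  then show "summable (\<lambda>k. norm (w ^ (k + 2)))" using w by (simp add: norm_power power_add mult.commute norm_mult)
  have s1: "(\<lambda>k. w^2 * w ^ k) sums (w^2 * (1 / (1 - w)))"
    by (intro sums_mult geometric_sums w)
  have e1: "(\<lambda>k. w^2 * w ^ k) = (\<lambda>k. w ^ (k + 2))" by (rule ext) (simp only: power_add mult.commute)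
  have e2: "w^2 * (1 / (1 - w)) = w^2 / (1 - w)" by simp
  show "(\<lambda>k. w ^ (k + 2)) sums (w^2 / (1 - w))" using s1 unfolding e1 e2 .
qed

lemma double_sum:
  assumes x: "norm x < 1"
  shows "((\<lambda>k. x^(k+2) * infsum (\<lambda>j. (tt N j)^(k+2)) (JJ N)) has_sum infsum (\<lambda>j. (x * tt N j)^2 / (1 - x * tt N j)) (JJ N)) UNIV"
    and "(\<lambda>j. (x * tt N j)^2 / (1 - x * tt N j)) summable_on JJ N"
proof -
  define P where "P j k = (x * tt N j) ^ (k + 2)" for j k
  have w: "norm (x * tt N j) < 1" if "j \<in> JJ N" for j
  proof -
    have "norm (x * tt N j) \<le> norm x * 1" unfolding norm_mult by (intro mult_left_mono tt_norm(1)[OF that]) auto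
    then show ?thesis using x by simp
  qed
  have inner: "((\<lambda>k. P j k) has_sum (x * tt N j)^2 / (1 - x * tt N j)) UNIV" if "j \<in> JJ N" for j
    unfolding P_def by (rule geo_has_sum[OF w[OF that]])
  have innern: "((\<lambda>k. norm (P j k)) has_sum (norm (x * tt N j))^2 / (1 - norm (x * tt N j))) UNIV" if "j \<in> JJ N" for j
    unfolding P_def norm_power using geo_has_sum[of "norm (x * tt N j)"] w[OF that] by simp
  have prod: "(\<lambda>(j, k). P j k) summable_on (JJ N \<times> UNIV)"
  proof -
    have "(\<lambda>p. norm ((\<lambda>(j, k). P j k) p)) summable_on Sigma (JJ N) (\<lambda>_. UNIV)"
    proof (subst Infinite_Sum.abs_summable_on_Sigma_iff, intro conjI ballI)
      fix j assume j: "j \<in> JJ N"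
      show "(\<lambda>k. norm (case (j, k) of (j, k) \<Rightarrow> P j k)) summable_on UNIV"
        using innern[OF j] by (auto simp: summable_on_def)
    next
      show "(\<lambda>j. norm (infsum (\<lambda>k. norm (case (j, k) of (j, k) \<Rightarrow> P j k)) UNIV)) summable_on JJ N"
      proof (rule summable_on_comparison_test[OF summable_on_cmult_right[OF bound_summable, of "1 / (1 - norm x)"]])
        fix j assume j: "j \<in> JJ N"
        have eq: "infsum (\<lambda>k. norm (case (j, k) of (j, k) \<Rightarrow> P j k)) UNIV = (norm (x * tt N j))^2 / (1 - norm (x * tt N j))"
          using innern[OF j] by (simp add: infsumI)
        have nn: "0 \<le> (norm (x * tt N j))^2 / (1 - norm (x * tt N j))" using w[OF j] by simp
        show "0 \<le> norm (infsum (\<lambda>k. norm (case (j, k) of (j, k) \<Rightarrow> P j k)) UNIV)" by simp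
        have "(norm (x * tt N j))^2 \<le> norm (tt N j) ^ 2"
        proof -
          have "norm (x * tt N j) \<le> norm (tt N j)" unfolding norm_mult using x by (intro mult_left_le_one_le) auto
          then show ?thesis by (intro power_mono) auto
        qed
        moreover have "1 - norm x \<le> 1 - norm (x * tt N j)"
          using tt_norm(1)[OF j] unfolding norm_mult by (simp add: mult_left_le)
        ultimately have "(norm (x * tt N j))^2 / (1 - norm (x * tt N j)) \<le> norm (tt N j) ^ 2 / (1 - norm x)"
          using x w[OF j] by (intro frac_le) auto
        then show "norm (infsum (\<lambda>k. norm (case (j, k) of (j, k) \<Rightarrow> P j k)) UNIV) \<le> 1 / (1 - norm x) * (1 / (real_of_int (int j - int N))^2)"
        proof -
          have "norm (infsum (\<lambda>k. norm (case (j, k) of (j, k) \<Rightarrow> P j k)) UNIV) = (norm (x * tt N j))^2 / (1 - norm (x * tt N j))"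
            unfolding eq using nn w[OF j] by simp
          also have "\<dots> \<le> norm (tt N j) ^ 2 / (1 - norm x)" by fact
          also have "\<dots> = 1 / (1 - norm x) * (1 / (real_of_int (int j - int N))^2)"
            unfolding tt_norm(2)[OF j] by simp
          finally show ?thesis .
        qed
      qed
    qed
    then show ?thesis using summable_on_iff_abs_summable_on_complex by blast
  qed
  have prod': "(\<lambda>(k, j). P j k) summable_on (UNIV \<times> JJ N)"
  proof -
    have e: "((\<lambda>(k, j). P j k) \<circ> prod.swap) = (\<lambda>(j, k). P j k)" by (auto simp: fun_eq_iff)
    have "(\<lambda>(k, j). P j k) summable_on (prod.swap ` (JJ N \<times> UNIV))"
      by (subst summable_on_reindex) (auto simp: e prod intro: inj_onI)
    then show ?thesis by (simp add: product_swap)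
  qed
  have outer: "(\<lambda>k. infsum (\<lambda>j. P j k) (JJ N)) summable_on UNIV"
    using summable_on_Sigma_banach[of "\<lambda>k j. P j k" UNIV "\<lambda>_. JJ N"] prod' by simp
  have swap: "infsum (\<lambda>k. infsum (\<lambda>j. P j k) (JJ N)) UNIV = infsum (\<lambda>j. infsum (\<lambda>k. P j k) UNIV) (JJ N)"
    by (rule infsum_swap_banach) (use prod' in simp)
  have inner_eq: "infsum (\<lambda>k. P j k) UNIV = (x * tt N j)^2 / (1 - x * tt N j)" if "j \<in> JJ N" for j
    using inner[OF that] by (rule infsumI)
  have term_eq: "x^(k+2) * infsum (\<lambda>j. (tt N j)^(k+2)) (JJ N) = infsum (\<lambda>j. P j k) (JJ N)" for k
  proof -
    have "x^(k+2) * infsum (\<lambda>j. (tt N j)^(k+2)) (JJ N) = infsum (\<lambda>j. x^(k+2) * (tt N j)^(k+2)) (JJ N)"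
      by (rule infsum_cmult_right'[symmetric])
    also have "\<dots> = infsum (\<lambda>j. P j k) (JJ N)" by (simp only: P_def power_mult_distrib)
    finally show ?thesis .
  qed
  show "((\<lambda>k. x^(k+2) * infsum (\<lambda>j. (tt N j)^(k+2)) (JJ N)) has_sum infsum (\<lambda>j. (x * tt N j)^2 / (1 - x * tt N j)) (JJ N)) UNIV"
  proof -
    have ic: "infsum (\<lambda>j. infsum (\<lambda>k. P j k) UNIV) (JJ N) = infsum (\<lambda>j. (x * tt N j)^2 / (1 - x * tt N j)) (JJ N)"
      by (rule infsum_cong) (rule inner_eq)
    show ?thesis unfolding term_eq using has_sum_infsum[OF outer] unfolding swap ic .
  qed
  have "(\<lambda>j. infsum (\<lambda>k. P j k) UNIV) summable_on JJ N"
    using summable_on_Sigma_banach[of "\<lambda>j k. P j k" "JJ N" "\<lambda>_. UNIV"] prod by simp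
  then show "(\<lambda>j. (x * tt N j)^2 / (1 - x * tt N j)) summable_on JJ N"
  proof -
    have "(\<lambda>j. infsum (\<lambda>k. P j k) UNIV) summable_on JJ N \<longleftrightarrow> (\<lambda>j. (x * tt N j)^2 / (1 - x * tt N j)) summable_on JJ N"
      by (rule summable_on_cong) (rule inner_eq)
    with \<open>(\<lambda>j. infsum (\<lambda>k. P j k) UNIV) summable_on JJ N\<close> show ?thesis by simp
  qed
qed

lemma nz_plus: assumes "norm x < 1" shows "(of_nat K :: complex) + 1 + x \<noteq> 0"
proof
  assume "(of_nat K :: complex) + 1 + x = 0"
  then have "x = - (of_nat K + 1)" by algebra
  also have "(of_nat K + 1 :: complex) = of_nat (Suc K)" by simp
  finally have xe: "x = - (of_nat (Suc K) :: complex)" .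
  have "norm x = norm (- (of_nat (Suc K) :: complex))" by (simp only: xe)
  also have "\<dots> = real (Suc K)" by (simp only: norm_minus_cancel norm_of_nat)
  finally have "norm x = real K + 1" by simp
  with assms show False by simp
qed

lemma nz_minus: assumes "norm x < 1" shows "(of_nat K :: complex) + 1 - x \<noteq> 0"
  using nz_plus[of "-x" K] assms by simp

lemma nz1: "(of_nat k + 1 :: complex) \<noteq> 0"
  by (metis add.commute of_nat_Suc of_nat_neq_0)

lemma alg1:
  fixes x z :: complex
  assumes z: "z \<noteq> 0" and zx: "z + x \<noteq> 0"
  shows "(x * (1 / - z))^2 / (1 - x * (1 / - z)) = x * (inverse z - inverse (z + x))"
proof -
  have e1: "1 - x * (1 / - z) = (z + x) / z" using z by (simp add: field_simps)
  have e2: "(x * (1 / - z))^2 = x^2 / z^2" by (simp add: power_divide power_mult_distrib)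
  have e3: "inverse z - inverse (z + x) = x / (z * (z + x))"
    using z zx by (simp add: field_simps)
  show ?thesis unfolding e1 e2 e3 using z zx by (simp add: field_simps power2_eq_square)
qed

lemma alg2:
  fixes x z :: complex
  assumes z: "z \<noteq> 0" and zx: "z - x \<noteq> 0"
  shows "(x * (1 / z))^2 / (1 - x * (1 / z)) = - x * (inverse z - inverse (z - x))"
proof -
  have e1: "1 - x * (1 / z) = (z - x) / z" using z by (simp add: field_simps)
  have e2: "(x * (1 / z))^2 = x^2 / z^2" by (simp add: power_divide power_mult_distrib)
  have e3: "inverse z - inverse (z - x) = - x / (z * (z - x))"
    using z zx by (simp add: field_simps)
  show ?thesis unfolding e1 e2 e3 using z zx by (simp add: field_simps power2_eq_square)
qed

lemma Q_eval:
  assumes N: "N \<ge> 1" and x: "norm x < 1"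
  shows "infsum (\<lambda>j. (x * tt N j)^2 / (1 - x * tt N j)) (JJ N) = x * (\<Sum>k<N-1. gg (1 + x) k) - x * suminf (gg (1 - x))"
proof -
  define Q where "Q j = (x * tt N j)^2 / (1 - x * tt N j)" for j
  define h where "h n = n + Suc N" for n
  have JJ: "JJ N = {1..<N} \<union> h ` UNIV"
  proof (rule set_eqI)
    fix j
    show "j \<in> JJ N \<longleftrightarrow> j \<in> {1..<N} \<union> h ` UNIV"
    proof
      assume j: "j \<in> JJ N"
      show "j \<in> {1..<N} \<union> h ` UNIV"
      proof (cases "j < N")
        case True then show ?thesis using j by (auto simp: JJ_def)
      next
        case False
        then have "j = h (j - Suc N)" using j by (auto simp: JJ_def h_def)
        then show ?thesis by blast
      qed
    next
      assume "j \<in> {1..<N} \<union> h ` UNIV"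
      then show "j \<in> JJ N" by (auto simp: JJ_def h_def)
    qed
  qed
  have disj: "{1..<N} \<inter> h ` UNIV = {}" by (auto simp: h_def)
  have Qs: "Q summable_on JJ N" unfolding Q_def by (rule double_sum(2)[OF x])
  have Qs2: "Q summable_on h ` UNIV" by (rule summable_on_subset_banach[OF Qs]) (auto simp: JJ)
  have "infsum Q (JJ N) = infsum Q {1..<N} + infsum Q (h ` UNIV)"
    unfolding JJ by (rule infsum_Un_disjoint) (use Qs2 disj in auto)
  also have "infsum Q {1..<N} = (\<Sum>k<N-1. x * gg (1 + x) k)"
  proof -
    have "infsum Q {1..<N} = sum Q {1..<N}" by simp
    also have "\<dots> = (\<Sum>k<N-1. x * gg (1 + x) k)"
    proof (rule sum.reindex_bij_witness[of _ "\<lambda>k. N - 1 - k" "\<lambda>j. N - 1 - j"])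
      fix k assume k: "k \<in> {..<N-1}"
      show "N - 1 - (N - 1 - k) = k" using k by auto
      show "N - 1 - k \<in> {1..<N}" using k by auto
    next
      fix j assume j: "j \<in> {1..<N}"
      show "N - 1 - (N - 1 - j) = j" using j by auto
      show "N - 1 - j \<in> {..<N-1}" using j by auto
      define k where "k = N - 1 - j"
      have t: "tt N j = 1 / - (of_nat k + 1)"
      proof -
        have "int j - int N = - (int k + 1)" using j by (auto simp: k_def)
        then have "(of_int (int j - int N) :: complex) = - (of_nat k + 1)" by simp
        then show ?thesis unfolding tt_def by (simp only:)
      qed
      have g: "gg (1 + x) k = inverse (of_nat k + 1) - inverse (of_nat k + 1 + x)"
        by (simp add: gg_def add_ac)
      have "Q j = x * gg (1 + x) k"
        unfolding Q_def t g by (rule alg1[OF nz1 nz_plus[OF x]])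
      then show "x * gg (1 + x) (N - 1 - j) = Q j" by (simp add: k_def)
    qed
    finally show ?thesis .
  qed
  also have "infsum Q (h ` UNIV) = - x * suminf (gg (1 - x))"
  proof -
    have inj: "inj h" by (auto simp: h_def inj_def)
    have eqQ: "(Q \<circ> h) = (\<lambda>n. - x * gg (1 - x) n)"
    proof
      fix n
      have t: "tt N (h n) = 1 / (of_nat n + 1)"
      proof -
        have "int (h n) - int N = int n + 1" by (simp add: h_def)
        then have "(of_int (int (h n) - int N) :: complex) = of_nat n + 1" by simp
        then show ?thesis unfolding tt_def by (simp only:)
      qed
      have g: "gg (1 - x) n = inverse (of_nat n + 1) - inverse (of_nat n + 1 - x)"
        by (simp add: gg_def algebra_simps)
      show "(Q \<circ> h) n = - x * gg (1 - x) n"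
        unfolding o_def Q_def t g by (rule alg2[OF nz1 nz_minus[OF x]])
    qed
    have s1: "(\<lambda>n. - x * gg (1 - x) n) summable_on UNIV"
      using Qs2 unfolding summable_on_reindex[OF inj] eqQ .
    have r: "infsum Q (h ` UNIV) = infsum (\<lambda>n. - x * gg (1 - x) n) UNIV"
      unfolding infsum_reindex[OF inj] eqQ ..
    have sa: "(\<lambda>n. - x * gg (1 - x) n) sums infsum (\<lambda>n. - x * gg (1 - x) n) UNIV"
      by (rule has_sum_imp_sums[OF has_sum_infsum[OF s1]])
    have sb: "(\<lambda>n. - x * gg (1 - x) n) sums (- x * suminf (gg (1 - x)))"
    proof -
      have "1 - x \<noteq> 0" using nz_minus[OF x, of 0] by simp
      then show ?thesis by (intro sums_mult summable_sums gg_summable)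
    qed
    show ?thesis unfolding r by (rule sums_unique2[OF sa sb])
  qed
  finally show ?thesis unfolding Q_def by (simp add: sum_distrib_left)
qed

lemma half_int_facts:
  fixes x :: complex
  assumes "2 * x \<notin> \<int>"
  shows "sin (2 * of_real pi * x) \<noteq> 0" "sin (of_real pi * x) \<noteq> 0" "cos (of_real pi * x) \<noteq> 0" "x \<notin> \<int>" "x \<noteq> 0"
proof -
  show s: "sin (2 * of_real pi * x) \<noteq> 0"
  proof
    assume "sin (2 * of_real pi * x) = 0"
    then obtain n :: int where "2 * of_real pi * x = of_real (of_int n * pi)" by (auto simp: sin_eq_0)
    then have "2 * x = of_int n" by (simp add: field_simps)
    with assms show False by simp
  qed
  have "sin (2 * of_real pi * x) = 2 * sin (of_real pi * x) * cos (of_real pi * x)"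
    using sin_double[of "of_real pi * x"] by (simp add: mult.assoc)
  then show "sin (of_real pi * x) \<noteq> 0" "cos (of_real pi * x) \<noteq> 0" using s by auto
  show "x \<notin> \<int>"
  proof
    assume "x \<in> \<int>" then have "2 * x \<in> \<int>" by simp
    with assms show False by simp
  qed
  then show "x \<noteq> 0" by auto
qed

lemma cot_half:
  fixes y :: complex
  assumes "sin y \<noteq> 0" "cos y \<noteq> 0"
  shows "(1 + cos (2 * y)) / (2 * sin (2 * y)) = cot y / 2"
  unfolding cos_double_cos sin_double using assms by (simp add: cot_def field_simps power2_eq_square)

lemma integrand_eq:
  fixes b :: int and N :: nat
  assumes "b = - int N" "sin (2 * of_real pi * x) \<noteq> 0"
  shows "(sin (2 * of_real pi * (x - of_int b) * of_real u) / sin (2 * of_real pi * x)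
                - of_real u * cos (2 * of_real pi * of_int b * of_real u)) * of_real (cot (pi * u))
         = phi N x (of_real u) * cc u / sin (2 * of_real pi * x)"
proof -
  have e1: "cos (2 * of_real pi * of_int b * of_real u) = cos (2 * of_real pi * of_nat N * (of_real u :: complex))"
    using cos_minus[of "2 * of_real pi * of_nat N * (of_real u :: complex)"] by (simp add: assms(1))
  have e2: "x - of_int b = x + of_nat N" by (simp add: assms(1))
  show ?thesis unfolding e1 e2 phi_def cc_def using assms(2) by (simp add: field_simps)
qed

lemma rhs_integral:
  fixes b :: int and N :: nat
  assumes "b = - int N" "sin (2 * of_real pi * x) \<noteq> 0"
  shows "integral {0..1::real}
         (\<lambda>u. (sin (2 * of_real pi * (x - of_int b) * of_real u) / sin (2 * of_real pi * x)
                - of_real u * cos (2 * of_real pi * of_int b * of_real u))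
               * of_real (cot (pi * u))) = II N x / sin (2 * of_real pi * x)"
  unfolding integrand_eq[OF assms] II_def by simp

lemma digamma_rel:
  fixes x :: complex
  assumes x: "x \<notin> \<int>" "x \<noteq> 0"
  shows "of_real pi * cot (of_real pi * x) = suminf (gg (1 - x)) - suminf (gg (1 + x)) + 1 / x"
proof -
  have d: "Digamma z = suminf (gg z) - euler_mascheroni" for z :: complex
    by (simp add: Digamma_def gg_def[abs_def])
  have "Digamma (x + 1) = Digamma x + 1 / x" by (rule Digamma_plus1[OF x(2)])
  then have "Digamma x = suminf (gg (1 + x)) - euler_mascheroni - 1 / x" by (simp add: d add.commute)
  then show ?thesis using Digamma_reflection[OF x(1)] by (simp add: d algebra_simps)
qed

lemma W_alg:
  fixes x n m :: complex
  assumes n: "n \<noteq> 0" and m: "m \<noteq> 0" and mx: "m = x + n"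
  shows "x^2 / (2 * (- n) * (x - (- n))) = - (x * (1 / n - 1 / m) / 2)"
proof -
  have a: "x - (- n) = m" using mx by simp
  have b: "1 / n - 1 / m = (m - n) / (n * m)" using n m by (simp add: field_simps)
  have c: "m - n = x" using mx by simp
  show ?thesis unfolding a b c using n m by (simp add: field_simps power2_eq_square)
qed

lemma final_alg:
  fixes x p C S1 S2 Sg s c II T W :: complex
  assumes x: "x \<noteq> 0" and p: "p \<noteq> 0" and s: "s \<noteq> 0"
    and R1: "p * C = S1 - S2 + 1 / x"
    and R2: "(1 + c) / (2 * s) = C / 2"
    and IIe: "II = (1 + c) / 2 + s / (2 * p) * (2 * (S2 - Sg) - T)"
    and W: "W = - (x * T / 2)"
  shows "1 + W - p * x / 2 * C - p * x * (II / s) = x * Sg - x * S1"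
proof -
  have "II / s = (1 + c) / (2 * s) + (2 * (S2 - Sg) - T) / (2 * p)"
    unfolding IIe using s p by (simp add: field_simps)
  also have "\<dots> = C / 2 + (2 * (S2 - Sg) - T) / (2 * p)" by (simp only: R2)
  finally have e: "II / s = C / 2 + (2 * (S2 - Sg) - T) / (2 * p)" .
  have "1 + W - p * x / 2 * C - p * x * (II / s) = 1 - x * (p * C) - x * S2 + x * Sg"
    unfolding e W using p by (simp add: field_simps)
  also have "\<dots> = x * Sg - x * S1"
    unfolding R1 using x by (simp add: field_simps)
  finally show ?thesis .
qed

theorem mainTheorem10:
  fixes b :: int
  assumes "b < 0"
  shows "(\<forall>k\<ge>2. (\<lambda>j. 1 / (of_int (int j + b) :: complex) ^ k) summable_on {j::nat. j \<ge> 1 \<and> int j \<noteq> - b})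
       \<and> (\<forall>x::complex. norm x < 1 \<longrightarrow> summable (\<lambda>k. x ^ (k + 2) * coeffB b (k + 2)))
       \<and> (\<forall>x::complex. norm x < 1 \<and> x \<noteq> of_int b \<and> 2 * x \<notin> \<int> \<longrightarrow> fB b x = rhsB b x)
       \<and> rhsB b holomorphic_on {x::complex. x \<noteq> of_int b \<and> 2 * x \<notin> \<int>}"
proof -
  define N where "N = nat (- b)"
  have N1: "N \<ge> 1" and bN: "b = - int N" using assms by (auto simp: N_def)
  have Jeq: "{j::nat. j \<ge> 1 \<and> int j \<noteq> - b} = JJ N" by (auto simp: JJ_def bN)
  have term_eq: "1 / (of_int (int j + b) :: complex) ^ k = (tt N j) ^ k" for j k
    by (simp add: tt_def bN power_one_over)
  have coeff: "coeffB b k = infsum (\<lambda>j. (tt N j) ^ k) (JJ N)" for k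
    unfolding coeffB_def Jeq term_eq ..
  have c1: "\<forall>k\<ge>2. (\<lambda>j. 1 / (of_int (int j + b) :: complex) ^ k) summable_on {j::nat. j \<ge> 1 \<and> int j \<noteq> - b}"
    unfolding Jeq term_eq by (intro allI impI tt_pow_summable)
  have hs: "((\<lambda>k. x ^ (k + 2) * coeffB b (k + 2)) has_sum infsum (\<lambda>j. (x * tt N j)^2 / (1 - x * tt N j)) (JJ N)) UNIV"
    if "norm x < 1" for x
    unfolding coeff by (rule double_sum(1)[OF that])
  have c2: "\<forall>x::complex. norm x < 1 \<longrightarrow> summable (\<lambda>k. x ^ (k + 2) * coeffB b (k + 2))"
  proof (intro allI impI)
    fix x :: complex assume "norm x < 1"
    from has_sum_imp_sums[OF hs[OF this]] show "summable (\<lambda>k. x ^ (k + 2) * coeffB b (k + 2))" by (rule sums_summable)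
  qed
  have c3: "fB b x = rhsB b x" if x: "norm x < 1" "x \<noteq> of_int b" "2 * x \<notin> \<int>" for x :: complex
  proof -
    note hf = half_int_facts[OF x(3)]
    define S1 where "S1 = suminf (gg (1 - x))"
    define S2 where "S2 = suminf (gg (1 + x))"
    define Sg where "Sg = (\<Sum>k<N-1. gg (1 + x) k)"
    have z: "1 + x \<noteq> 0" using not_Int_nz[OF hf(4), of 1] by (simp add: add.commute)
    have f: "fB b x = x * Sg - x * S1"
    proof -
      have "fB b x = infsum (\<lambda>j. (x * tt N j)^2 / (1 - x * tt N j)) (JJ N)"
        unfolding fB_def by (rule sums_unique[OF has_sum_imp_sums[OF hs[OF x(1)]], symmetric])
      also have "\<dots> = x * Sg - x * S1" unfolding Sg_def S1_def by (rule Q_eval[OF N1 x(1)])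
      finally show ?thesis .
    qed
    have IIe: "II N x = (1 + cos (2 * of_real pi * x)) / 2 + sin (2 * of_real pi * x) / (2 * of_real pi) *
        (2 * (S2 - Sg) - (1 / of_nat N - 1 / (x + of_nat N)))"
    proof -
      have NS: "N = Suc (N - 1)" using N1 by simp
      have g: "gg (1 + x) (N - 1) = 1 / of_nat N - 1 / (x + of_nat N)"
      proof -
        have "(1 + x) + of_nat (N - 1) = x + of_nat N" using N1 by (simp add: of_nat_diff)
        moreover have "of_nat (Suc (N - 1)) = (of_nat N :: complex)" using NS by simp
        ultimately show ?thesis by (simp add: gg_def divide_inverse)
      qed
      have "II N x = II (Suc (N - 1)) x" using NS by simp
      also have "\<dots> = (1 + cos (2 * of_real pi * x)) / 2 + sin (2 * of_real pi * x) / (2 * of_real pi) * (2 * TT' (1 + x) (N - 1) - gg (1 + x) (N - 1))"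
        by (rule II_closed[OF hf(4)])
      finally show ?thesis unfolding TT'_eq[OF z] g S2_def Sg_def .
    qed
    have "rhsB b x = 1 + x^2 / (2 * (- of_nat N) * (x - (- of_nat N))) - of_real pi * x / 2 * cot (of_real pi * x)
        - of_real pi * x * (II N x / sin (2 * of_real pi * x))"
      unfolding rhsB_def rhs_integral[OF bN hf(1)] by (simp add: bN)
    also have "\<dots> = x * Sg - x * S1"
    proof (rule final_alg[OF hf(5) _ hf(1) _ _ IIe])
      show "complex_of_real pi \<noteq> 0" by simp
      show "of_real pi * cot (of_real pi * x) = S1 - S2 + 1 / x"
        unfolding S1_def S2_def by (rule digamma_rel[OF hf(4) hf(5)])
      show "(1 + cos (2 * of_real pi * x)) / (2 * sin (2 * of_real pi * x)) = cot (of_real pi * x) / 2"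
        using cot_half[OF hf(2) hf(3)] by (simp add: mult.assoc)
      show "x^2 / (2 * (- of_nat N) * (x - (- of_nat N))) = - (x * (1 / of_nat N - 1 / (x + of_nat N)) / 2)"
        by (rule W_alg) (use N1 not_Int_nz[OF hf(4), of N] in auto)
    qed
    finally show ?thesis using f by simp
  qed
  have c4: "rhsB b holomorphic_on {x::complex. x \<noteq> of_int b \<and> 2 * x \<notin> \<int>}"
  proof (rule holomorphic_transform)
    let ?D = "{x::complex. x \<noteq> of_int b \<and> 2 * x \<notin> \<int>}"
    show "(\<lambda>x. 1 + x^2 / (2 * of_int b * (x - of_int b)) - of_real pi * x / 2 * (cos (of_real pi * x) / sin (of_real pi * x))
        - of_real pi * x * (II N x / sin (2 * of_real pi * x))) holomorphic_on ?D"
    proof -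
      have ii: "II N holomorphic_on ?D" by (rule holomorphic_on_subset[OF II_holo]) simp
      have nz1: "2 * of_int b * (x - of_int b) \<noteq> 0" if "x \<in> ?D" for x using that assms by auto
      have nz2: "sin (of_real pi * x) \<noteq> 0" if "x \<in> ?D" for x using that half_int_facts(2) by auto
      have nz3: "sin (2 * of_real pi * x) \<noteq> 0" if "x \<in> ?D" for x using that half_int_facts(1) by auto
      show ?thesis by (intro holomorphic_intros ii nz1 nz2 nz3) auto
    qed
    fix x assume "x \<in> ?D"
    then have x: "x \<noteq> of_int b" "2 * x \<notin> \<int>" by auto
    note hf = half_int_facts[OF x(2)]
    show "1 + x^2 / (2 * of_int b * (x - of_int b)) - of_real pi * x / 2 * (cos (of_real pi * x) / sin (of_real pi * x))
        - of_real pi * x * (II N x / sin (2 * of_real pi * x)) = rhsB b x"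
      unfolding rhsB_def rhs_integral[OF bN hf(1)] by (simp add: cot_def)
  qed
  show ?thesis
  proof (intro conjI)
    show "\<forall>x::complex. norm x < 1 \<and> x \<noteq> of_int b \<and> 2 * x \<notin> \<int> \<longrightarrow> fB b x = rhsB b x"
      using c3 by blast
  qed (rule c1, rule c2, rule c4)
qed

end
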